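(* Let $d_{CC}$ be the CC metric on $H(\mathbb{R})$ induced by the $\ell^1$ norm on $\mathbb{R}^2$, and $|\cdot|_{\sf std}$ the word length on $H(\mathbb{Z})$ with respect to ${\sf std}=\{\pm{\sf e}_1,\pm{\sf e}_2\}$. Fix $(x,y)\in\mathbb{Z}^2$. For $z\ge0$ with $z\in\mathbb{Z}+\epsilon(x,y)$, let $n$ be the unique integer with the same parity as $x+y$ such that $n-2<d_{CC}((x,y,z),{\sf 0})\le n$. Then $|(x,y,z)|_{\sf std}=n$.
   Context: Exponential coordinates on $H(\mathbb{R})$: $(x,y,z)(x',y',z')=(x+x',y+y',z+z'+\tfrac12(xy'-yx'))$, ${\sf 0}=(0,0,0)$. $H(\mathbb{Z})=\{(x,y,z):x,y\in\mathbb{Z},z\in\mathbb{Z}+\epsilon(x,y)\}$ with $\epsilon(x,y)=1/2$ if $x,y$ both odd and $0$ otherwise; ${\sf e}_1=(1,0,0)$, ${\sf e}_2=(0,1,0)$. The CC metric: $d_{CC}({\sf p},{\sf q})$ is the infimum over admissible curves ($\gamma_3'=\tfrac12(\gamma_1\gamma_2'-\gamma_2\gamma_1')$) from ${\sf p}$ to ${\sf q}$ of the $\ell^1$-length of their projection to the $(x,y)$-plane. *)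

theory Defs
  imports "HOL-Analysis.Analysis"
begin

text \<open>Points of H(R) in exponential coordinates, as triples (x, y, z).\<close>
type_synonym heis = "real \<times> real \<times> real"

definition hmul :: "heis \<Rightarrow> heis \<Rightarrow> heis" where
  "hmul p q = (case p of (x, y, z) \<Rightarrow> case q of (x', y', z') \<Rightarrow>
     (x + x', y + y', z + z' + (x * y' - y * x') / 2))"

definition hzero :: heis where "hzero = (0, 0, 0)"

definition eps :: "int \<Rightarrow> int \<Rightarrow> real" where
  "eps x y = (if odd x \<and> odd y then 1/2 else 0)"

definition HZ :: "heis set" where
  "HZ = {(x, y, z). x \<in> \<int> \<and> y \<in> \<int> \<and>
          z - eps \<lfloor>x\<rfloor> \<lfloor>y\<rfloor> \<in> \<int>}"

definition std :: "heis set" where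
  "std = {(1, 0, 0), (-1, 0, 0), (0, 1, 0), (0, -1, 0)}"

definition word_length :: "heis \<Rightarrow> nat" where
  "word_length g = (LEAST n. \<exists>ws. length ws = n \<and> set ws \<subseteq> std \<and>
                                foldr hmul ws hzero = g)"

definition admissible_length :: "heis \<Rightarrow> heis \<Rightarrow> real \<Rightarrow> bool" where
  "admissible_length p q L \<longleftrightarrow>
     (\<exists>g1 g2 :: real \<Rightarrow> real.
        g1 absolutely_integrable_on {0..1} \<and> g2 absolutely_integrable_on {0..1} \<and>
        (let c1 = (\<lambda>t. fst p + integral {0..t} g1);
             c2 = (\<lambda>t. fst (snd p) + integral {0..t} g2);
             c3 = (\<lambda>t. snd (snd p) +
                     integral {0..t} (\<lambda>s. (c1 s * g2 s - c2 s * g1 s) / 2))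
         in (c1 1, c2 1, c3 1) = q \<and>
            L = integral {0..1} (\<lambda>s. \<bar>g1 s\<bar> + \<bar>g2 s\<bar>)))"

definition d_CC :: "heis \<Rightarrow> heis \<Rightarrow> real" where
  "d_CC p q = Inf {L. admissible_length p q L}"

end

theory Submission
  imports Defs
begin

lemma hmul_assoc: "hmul (hmul p q) r = hmul p (hmul q r)"
  by (cases p; cases q; cases r) (simp add: hmul_def field_simps)

lemma hmul_zero_left[simp]: "hmul hzero p = p"
  by (cases p) (simp add: hmul_def hzero_def)

lemma hmul_zero_right[simp]: "hmul p hzero = p"
  by (cases p) (simp add: hmul_def hzero_def)

lemma foldr_append_hmul: "foldr hmul (xs @ ys) hzero = hmul (foldr hmul xs hzero) (foldr hmul ys hzero)"
  by (induction xs) (simp_all add: hmul_assoc)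

lemma foldr_replicate_hmul: "foldr hmul (replicate n (a, b, 0)) hzero = (real n * a, real n * b, 0)"
  by (induction n) (auto simp: hmul_def hzero_def field_simps)


definition gpow :: "real \<Rightarrow> real \<Rightarrow> int \<Rightarrow> heis list" where
  "gpow a b k = (if k \<ge> 0 then replicate (nat k) (a, b, 0) else replicate (nat (-k)) (-a, -b, 0))"

lemma gpow_prod: "foldr hmul (gpow a b k) hzero = (of_int k * a, of_int k * b, 0)"
proof (cases "k \<ge> 0")
  case True
  then show ?thesis unfolding gpow_def using foldr_replicate_hmul[of "nat k" a b] by simp
next
  case False
  then show ?thesis unfolding gpow_def using foldr_replicate_hmul[of "nat (-k)" "-a" "-b"] by simp
qed

lemma gpow_len: "length (gpow a b k) = nat \<bar>k\<bar>"
  by (simp add: gpow_def)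

lemma gpow_std1: "set (gpow 1 0 k) \<subseteq> std"
  by (auto simp: gpow_def std_def)

lemma gpow_std2: "set (gpow 0 1 k) \<subseteq> std"
  by (auto simp: gpow_def std_def)

definition famw :: "int \<Rightarrow> int \<Rightarrow> int \<Rightarrow> int \<Rightarrow> int \<Rightarrow> heis list" where
  "famw x y a c r = gpow 0 1 (y - c) @ gpow 1 0 (a - r) @ [(0,1,0)] @ gpow 1 0 r @ gpow 0 1 (c - 1) @ gpow 1 0 (x - a)"

lemma famw_prod: "foldr hmul (famw x y a c r) hzero = (of_int x, of_int y, of_int a * of_int c - of_int x * of_int y / 2 - of_int r)"
proof -
  have e: "foldr hmul [(0::real,1::real,0::real)] hzero = (0,1,0)" by simp
  show ?thesis
    unfolding famw_def foldr_append_hmul gpow_prod e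
    by (simp add: hmul_def field_simps)
qed

lemma famw_std: "set (famw x y a c r) \<subseteq> std"
  using gpow_std1 gpow_std2 by (auto simp: famw_def std_def)

lemma famw_len: "length (famw x y a c r) = nat \<bar>y - c\<bar> + nat \<bar>a - r\<bar> + 1 + nat \<bar>r\<bar> + nat \<bar>c - 1\<bar> + nat \<bar>x - a\<bar>"
  by (simp add: famw_def gpow_len)


lemma word_QI:
  fixes x y a b :: int and z :: real and Zi :: int
  assumes "x \<ge> 0" "y \<ge> 0" "a \<ge> x" "b \<ge> y" "z \<ge> 0"
    and Zi: "real_of_int Zi = z + real_of_int x * real_of_int y / 2" and ab: "Zi \<le> a * b"
  shows "\<exists>ws. set ws \<subseteq> std \<and> int (length ws) \<le> 2*a + 2*b - x - y \<and>
           foldr hmul ws hzero = (real_of_int x, real_of_int y, z)"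
proof (cases "Zi = 0")
  case True
  have xy0: "x * y = 0" and z0: "z = 0"
  proof -
    have "real_of_int x * real_of_int y \<ge> 0" using assms(1,2) by simp
    then show "z = 0" using Zi True \<open>z \<ge> 0\<close> by linarith
    then have "real_of_int (x*y) = 0" using Zi True by simp
    then show "x * y = 0" by (simp only: of_int_eq_0_iff)
  qed
  define ws where "ws = gpow 0 1 y @ gpow 1 0 x"
  have p0: "foldr hmul ws hzero = (real_of_int x, real_of_int y, - real_of_int x * real_of_int y / 2)"
    unfolding ws_def foldr_append_hmul gpow_prod by (simp add: hmul_def)
  have "real_of_int x * real_of_int y = 0" using xy0 by (metis of_int_0 of_int_mult)
  then have p: "foldr hmul ws hzero = (real_of_int x, real_of_int y, z)" using z0 p0 by simp
  have "set ws \<subseteq> std" unfolding ws_def using gpow_std1 gpow_std2 by auto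
  moreover have "int (length ws) \<le> 2*a + 2*b - x - y" unfolding ws_def using assms by (simp add: gpow_len)
  ultimately show ?thesis using p by blast
next
  case False
  have Zpos: "Zi \<ge> 1"
  proof -
    have "real_of_int x * real_of_int y \<ge> 0" using assms(1,2) by simp
    then have "real_of_int Zi \<ge> 0" using Zi \<open>z \<ge> 0\<close> by linarith
    then show ?thesis using False by simp
  qed
  have apos: "a \<ge> 1"
  proof (rule ccontr)
    assume "\<not> a \<ge> 1" then have "a \<le> 0" by simp
    then have "a * b \<le> 0" using assms by (simp add: mult_nonpos_nonneg)
    then show False using ab Zpos by simp
  qed
  define c where "c = (Zi + a - 1) div a"
  define m where "m = (Zi + a - 1) mod a"
  have dm: "Zi + a - 1 = a * c + m" unfolding c_def m_def by simp
  have m0: "0 \<le> m" "m < a" unfolding m_def using apos by simp_all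
  define r where "r = a * c - Zi"
  have r0: "0 \<le> r" "r < a" unfolding r_def using dm m0 by linarith+
  have c1: "c \<ge> 1"
  proof (rule ccontr)
    assume "\<not> c \<ge> 1" then have "c \<le> 0" by simp
    then have "a * c \<le> 0" using apos by (simp add: mult_nonneg_nonpos)
    then show False using r0 Zpos unfolding r_def by linarith
  qed
  have cb: "c \<le> b"
  proof (rule ccontr)
    assume "\<not> c \<le> b" then have "c \<ge> b + 1" by simp
    then have "a * c \<ge> a * (b + 1)" using apos by (simp add: mult_left_mono)
    then show False using r0 ab unfolding r_def by (simp add: algebra_simps)
  qed
  define ws where "ws = famw x y a c r"
  have p: "foldr hmul ws hzero = (real_of_int x, real_of_int y, z)"
  proof -
    have "real_of_int a * real_of_int c - real_of_int x * real_of_int y / 2 - real_of_int r = z"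
      using Zi unfolding r_def by simp
    then show ?thesis unfolding ws_def famw_prod by simp
  qed
  have "int (length ws) = \<bar>y - c\<bar> + (a - r) + 1 + r + (c - 1) + (a - x)"
    unfolding ws_def famw_len using r0 c1 assms by simp
  also have "\<dots> \<le> 2*a + 2*b - x - y" using cb assms by (simp add: abs_if)
  finally show ?thesis using p famw_std unfolding ws_def by blast
qed

definition rot :: "heis \<Rightarrow> heis" where "rot p = (case p of (x, y, z) \<Rightarrow> (-y, x, z))"

lemma rot_hmul: "rot (hmul p q) = hmul (rot p) (rot q)"
  by (cases p; cases q) (simp add: rot_def hmul_def field_simps)

lemma rot_simp[simp]: "rot (a, b, c) = (-b, a, c)" by (simp add: rot_def)

lemma rot_zero: "rot hzero = hzero" by (simp add: hzero_def)

lemma rot_foldr: "foldr hmul (map rot ws) hzero = rot (foldr hmul ws hzero)"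
  by (induction ws) (simp_all add: rot_hmul rot_zero)

lemma rot_in_std: "p \<in> std \<Longrightarrow> rot p \<in> std"
  unfolding std_def by (elim insertE) simp_all

lemma rot_std: "set ws \<subseteq> std \<Longrightarrow> set (map rot ws) \<subseteq> std"
  using rot_in_std by auto

lemma rot_word:
  assumes "set ws \<subseteq> std" "foldr hmul ws hzero = p"
  shows "set (map rot ws) \<subseteq> std \<and> length (map rot ws) = length ws \<and> foldr hmul (map rot ws) hzero = rot p"
  using assms rot_std rot_foldr by auto

lemma word_exists:
  fixes x y a b :: int and z :: real and Zi :: int
  assumes "a \<ge> \<bar>x\<bar>" "b \<ge> \<bar>y\<bar>" "z \<ge> 0"
    and Zi: "real_of_int Zi = z + real_of_int \<bar>x\<bar> * real_of_int \<bar>y\<bar> / 2" and ab: "Zi \<le> a * b"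
  shows "\<exists>ws. set ws \<subseteq> std \<and> int (length ws) \<le> 2*a + 2*b - \<bar>x\<bar> - \<bar>y\<bar> \<and>
           foldr hmul ws hzero = (real_of_int x, real_of_int y, z)"
proof -
  have ba: "Zi \<le> b * a" using ab by (simp add: mult.commute)
  consider "x \<ge> 0" "y \<ge> 0" | "x < 0" "y \<ge> 0" | "x < 0" "y < 0" | "x \<ge> 0" "y < 0" by linarith
  then show ?thesis
  proof cases
    case 1
    then have e: "\<bar>x\<bar> = x" "\<bar>y\<bar> = y" by simp_all
    show ?thesis using word_QI[of x y a b z Zi] assms(1-3) Zi ab 1 unfolding e by blast
  next
    case 2
    then have e: "\<bar>x\<bar> = -x" "\<bar>y\<bar> = y" by simp_all
    have Z2: "real_of_int Zi = z + real_of_int y * real_of_int (-x) / 2" using Zi unfolding e by (simp add: mult.commute)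
    obtain ws where w: "set ws \<subseteq> std" "int (length ws) \<le> 2*b + 2*a - y - (-x)"
      "foldr hmul ws hzero = (real_of_int y, real_of_int (-x), z)"
      using word_QI[of y "-x" b a z Zi, OF _ _ _ _ _ Z2 ba] assms(1-3) 2 unfolding e by fastforce
    note r1 = rot_word[OF w(1) w(3)]
    have "int (length (map rot ws)) \<le> 2*a + 2*b - \<bar>x\<bar> - \<bar>y\<bar>" using w(2) unfolding e by simp
    moreover have "rot (real_of_int y, real_of_int (-x), z) = (real_of_int x, real_of_int y, z)" by simp
    ultimately show ?thesis using r1 by (intro exI[of _ "map rot ws"]) simp
  next
    case 3
    then have e: "\<bar>x\<bar> = -x" "\<bar>y\<bar> = -y" by simp_all
    have Z2: "real_of_int Zi = z + real_of_int (-x) * real_of_int (-y) / 2" using Zi unfolding e by simp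
    obtain ws where w: "set ws \<subseteq> std" "int (length ws) \<le> 2*a + 2*b - (-x) - (-y)"
      "foldr hmul ws hzero = (real_of_int (-x), real_of_int (-y), z)"
      using word_QI[of "-x" "-y" a b z Zi, OF _ _ _ _ _ Z2 ab] assms(1-3) 3 unfolding e by fastforce
    note r1 = rot_word[OF w(1) w(3)]
    note r2 = rot_word[OF r1 [THEN conjunct1] r1[THEN conjunct2, THEN conjunct2]]
    have "int (length (map rot (map rot ws))) \<le> 2*a + 2*b - \<bar>x\<bar> - \<bar>y\<bar>" using w(2) unfolding e by simp
    moreover have "rot (rot (real_of_int (-x), real_of_int (-y), z)) = (real_of_int x, real_of_int y, z)" by simp
    ultimately show ?thesis using r2 by (intro exI[of _ "map rot (map rot ws)"]) simp
  next
    case 4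
    then have e: "\<bar>x\<bar> = x" "\<bar>y\<bar> = -y" by simp_all
    have Z2: "real_of_int Zi = z + real_of_int (-y) * real_of_int x / 2" using Zi unfolding e by (simp add: mult.commute)
    obtain ws where w: "set ws \<subseteq> std" "int (length ws) \<le> 2*b + 2*a - (-y) - x"
      "foldr hmul ws hzero = (real_of_int (-y), real_of_int x, z)"
      using word_QI[of "-y" x b a z Zi, OF _ _ _ _ _ Z2 ba] assms(1-3) 4 unfolding e by fastforce
    note r1 = rot_word[OF w(1) w(3)]
    note r2 = rot_word[OF r1 [THEN conjunct1] r1[THEN conjunct2, THEN conjunct2]]
    note r3 = rot_word[OF r2 [THEN conjunct1] r2[THEN conjunct2, THEN conjunct2]]
    have "int (length (map rot (map rot (map rot ws)))) \<le> 2*a + 2*b - \<bar>x\<bar> - \<bar>y\<bar>" using w(2) unfolding e by simp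
    moreover have "rot (rot (rot (real_of_int (-y), real_of_int x, z))) = (real_of_int x, real_of_int y, z)" by simp
    ultimately show ?thesis using r3 by (intro exI[of _ "map rot (map rot (map rot ws))"]) simp
  qed
qed


lemma stretch1:
  fixes f :: "real \<Rightarrow> real"
  assumes f: "f integrable_on {0..1}" and t: "0 \<le> t" "t \<le> 1/2"
  shows "((\<lambda>s. 2 * f (2 * s)) has_integral integral {0..2*t} f) {0..t}"
proof -
  have "f integrable_on {0..2*t}" by (rule integrable_subinterval_real[OF f]) (use t in auto)
  then have "(f has_integral integral {0..2*t} f) (cbox 0 (2*t))" by auto
  from has_integral_affinity'[OF this, of 2 0]
  have "((\<lambda>x. f (2 * x)) has_integral integral {0..2*t} f / 2) {0..t}"
    by simp
  from has_integral_mult_right[OF this, of 2] show ?thesis by simp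
qed

lemma stretch2:
  fixes f :: "real \<Rightarrow> real"
  assumes f: "f integrable_on {0..1}" and t: "1/2 \<le> t" "t \<le> 1"
  shows "((\<lambda>s. 2 * f (2 * s - 1)) has_integral integral {0..2*t-1} f) {1/2..t}"
proof -
  have "f integrable_on {0..2*t-1}" by (rule integrable_subinterval_real[OF f]) (use t in auto)
  then have "(f has_integral integral {0..2*t-1} f) (cbox 0 (2*t-1))" by auto
  from has_integral_affinity'[OF this, of 2 "-1"]
  have "((\<lambda>x. f (2 * x - 1)) has_integral integral {0..2*t-1} f / 2) {1/2..t}"
    by (simp add: field_simps)
  from has_integral_mult_right[OF this, of 2] show ?thesis by simp
qed

definition cat :: "(real \<Rightarrow> real) \<Rightarrow> (real \<Rightarrow> real) \<Rightarrow> real \<Rightarrow> real" where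
  "cat f h s = (if s \<le> 1/2 then 2 * f (2 * s) else 2 * h (2 * s - 1))"

lemma cat_has_integral:
  fixes f h :: "real \<Rightarrow> real"
  assumes f: "f integrable_on {0..1}" and h: "h integrable_on {0..1}" and t: "0 \<le> t" "t \<le> 1"
  shows "(cat f h has_integral (if t \<le> 1/2 then integral {0..2*t} f
            else integral {0..1} f + integral {0..2*t-1} h)) {0..t}"
proof (cases "t \<le> 1/2")
  case True
  have "((\<lambda>s. 2 * f (2 * s)) has_integral integral {0..2*t} f) {0..t}" using stretch1[OF f t(1) True] .
  then have "(cat f h has_integral integral {0..2*t} f) {0..t}"
    by (rule has_integral_eq[rotated]) (use True in \<open>auto simp: cat_def\<close>)
  then show ?thesis using True by simp
next
  case False
  have a: "((\<lambda>s. 2 * f (2 * s)) has_integral integral {0..1} f) {0..1/2}" using stretch1[OF f, of "1/2"] by simp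
  then have a': "(cat f h has_integral integral {0..1} f) {0..1/2}"
    by (rule has_integral_eq[rotated]) (auto simp: cat_def)
  have b: "((\<lambda>s. 2 * h (2 * s - 1)) has_integral integral {0..2*t-1} h) {1/2..t}"
    using stretch2[OF h, of t] False t by simp
  have b': "(cat f h has_integral integral {0..2*t-1} h) {1/2..t}"
    using has_integral_spike_finite[of "{1/2}" "{1/2..t}" "cat f h" "\<lambda>s. 2 * h (2 * s - 1)", OF _ _ b]
    by (auto simp: cat_def)
  from has_integral_combine[OF _ _ a' b'] False show ?thesis by simp
qed

lemma cat_integrable:
  fixes f h :: "real \<Rightarrow> real"
  assumes f: "f integrable_on {0..1}" and h: "h integrable_on {0..1}"
  shows "cat f h integrable_on {0..1}"
  using cat_has_integral[OF f h, of 1] by auto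

lemma cat_integral1:
  fixes f h :: "real \<Rightarrow> real"
  assumes f: "f integrable_on {0..1}" and h: "h integrable_on {0..1}"
  shows "integral {0..1} (cat f h) = integral {0..1} f + integral {0..1} h"
  using cat_has_integral[OF f h, of 1] by (auto dest: integral_unique)

lemma cat_integral:
  fixes f h :: "real \<Rightarrow> real"
  assumes f: "f integrable_on {0..1}" and h: "h integrable_on {0..1}" and t: "0 \<le> t" "t \<le> 1"
  shows "integral {0..t} (cat f h) = (if t \<le> 1/2 then integral {0..2*t} f
            else integral {0..1} f + integral {0..2*t-1} h)"
  using cat_has_integral[OF f h t] by (rule integral_unique)

lemma cat_abs: "\<bar>cat f h s\<bar> = cat (\<lambda>s. \<bar>f s\<bar>) (\<lambda>s. \<bar>h s\<bar>) s"
  by (simp add: cat_def abs_mult)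

lemma cat_absint:
  fixes f h :: "real \<Rightarrow> real"
  assumes f: "f absolutely_integrable_on {0..1}" and h: "h absolutely_integrable_on {0..1}"
  shows "cat f h absolutely_integrable_on {0..1}"
proof (rule abs_absolutely_integrableI_1)
  show "cat f h integrable_on {0..1}" using f h cat_integrable by (auto simp: absolutely_integrable_on_def)
  have "cat (\<lambda>s. \<bar>f s\<bar>) (\<lambda>s. \<bar>h s\<bar>) integrable_on {0..1}"
    using f h by (intro cat_integrable) (auto simp: absolutely_integrable_on_def)
  then show "(\<lambda>x. \<bar>cat f h x\<bar>) integrable_on {0..1}" by (simp add: cat_abs)
qed

lemma contprod_absint:
  fixes c g :: "real \<Rightarrow> real"
  assumes c: "continuous_on {0..1} c" and g: "g absolutely_integrable_on {0..1}"
  shows "(\<lambda>s. c s * g s) absolutely_integrable_on {0..1}"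
proof (rule absolutely_integrable_bounded_measurable_product_real[OF _ _ _ g])
  show "c \<in> borel_measurable (lebesgue_on {0..1})"
    by (rule continuous_imp_measurable_on_sets_lebesgue[OF c]) simp
  show "{0..1::real} \<in> sets lebesgue" by simp
  show "bounded (c ` {0..1})" using c compact_continuous_image compact_imp_bounded compact_Icc by blast
qed


definition C1 :: "heis \<Rightarrow> (real \<Rightarrow> real) \<Rightarrow> real \<Rightarrow> real" where
  "C1 p g1 t = fst p + integral {0..t} g1"
definition C2 :: "heis \<Rightarrow> (real \<Rightarrow> real) \<Rightarrow> real \<Rightarrow> real" where
  "C2 p g2 t = fst (snd p) + integral {0..t} g2"
definition FF :: "heis \<Rightarrow> (real \<Rightarrow> real) \<Rightarrow> (real \<Rightarrow> real) \<Rightarrow> real \<Rightarrow> real" where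
  "FF p g1 g2 s = (C1 p g1 s * g2 s - C2 p g2 s * g1 s) / 2"

lemma adm_iff: "admissible_length p q L \<longleftrightarrow>
  (\<exists>g1 g2. g1 absolutely_integrable_on {0..1} \<and> g2 absolutely_integrable_on {0..1} \<and>
     (C1 p g1 1, C2 p g2 1, snd (snd p) + integral {0..1} (FF p g1 g2)) = q \<and>
     L = integral {0..1} (\<lambda>s. \<bar>g1 s\<bar> + \<bar>g2 s\<bar>))"
  unfolding admissible_length_def Let_def C1_def C2_def FF_def by simp

lemma C1_cont: "g1 integrable_on {0..1} \<Longrightarrow> continuous_on {0..1} (C1 p g1)"
  unfolding C1_def by (intro continuous_intros indefinite_integral_continuous_1)

lemma C2_cont: "g2 integrable_on {0..1} \<Longrightarrow> continuous_on {0..1} (C2 p g2)"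
  unfolding C2_def by (intro continuous_intros indefinite_integral_continuous_1)

lemma FF_absint:
  assumes "g1 absolutely_integrable_on {0..1}" "g2 absolutely_integrable_on {0..1}"
  shows "FF p g1 g2 absolutely_integrable_on {0..1}"
proof -
  have i1: "g1 integrable_on {0..1}" "g2 integrable_on {0..1}" using assms absolutely_integrable_on_def by blast+
  have "(\<lambda>s. C1 p g1 s * g2 s) absolutely_integrable_on {0..1}"
    by (rule contprod_absint[OF C1_cont[OF i1(1)] assms(2)])
  moreover have "(\<lambda>s. C2 p g2 s * g1 s) absolutely_integrable_on {0..1}"
    by (rule contprod_absint[OF C2_cont[OF i1(2)] assms(1)])
  ultimately have "(\<lambda>s. C1 p g1 s * g2 s - C2 p g2 s * g1 s) absolutely_integrable_on {0..1}"
    by (rule set_integral_diff)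
  from absolutely_integrable_scaleR_left[OF this, of "1/2"]
  have "(\<lambda>s. (1/2) *\<^sub>R (C1 p g1 s * g2 s - C2 p g2 s * g1 s)) absolutely_integrable_on {0..1}" .
  moreover have "FF p g1 g2 = (\<lambda>s. (1/2) *\<^sub>R (C1 p g1 s * g2 s - C2 p g2 s * g1 s))"
    by (rule ext) (simp add: FF_def)
  ultimately show ?thesis by simp
qed

lemma FF_int: "g1 absolutely_integrable_on {0..1} \<Longrightarrow> g2 absolutely_integrable_on {0..1} \<Longrightarrow> FF p g1 g2 integrable_on {0..1}"
  using FF_absint absolutely_integrable_on_def by blast

lemma adm_zero: "admissible_length p p 0"
proof -
  have "FF p (\<lambda>s. 0) (\<lambda>s. 0) = (\<lambda>s. 0)" by (rule ext) (simp add: FF_def)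
  then show ?thesis unfolding adm_iff
    by (intro exI[of _ "\<lambda>s. 0"]) (cases p, simp add: C1_def C2_def)
qed

lemma adm_seg: assumes "s \<in> std" shows "admissible_length s hzero 1"
proof -
  obtain a b where s: "s = (a, b, 0)" and ab: "\<bar>a\<bar> + \<bar>b\<bar> = 1" using assms unfolding std_def by auto
  have F0: "FF s (\<lambda>t. - a) (\<lambda>t. - b) t = 0" if "0 \<le> t" for t
    using that by (simp add: FF_def C1_def C2_def s algebra_simps)
  have "integral {0..1} (FF s (\<lambda>t. - a) (\<lambda>t. - b)) = integral {0..1} (\<lambda>t::real. 0::real)"
    by (rule Henstock_Kurzweil_Integration.integral_cong) (simp add: F0)
  then show ?thesis unfolding adm_iff
    by (intro exI[of _ "\<lambda>t. - a"] exI[of _ "\<lambda>t. - b"])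
       (simp add: C1_def C2_def s hzero_def ab)
qed


lemma ai_int: "(g::real\<Rightarrow>real) absolutely_integrable_on {0..1::real} \<Longrightarrow> g integrable_on {0..1}"
  by (simp add: absolutely_integrable_on_def)

lemma ai_absint: assumes "(g::real\<Rightarrow>real) absolutely_integrable_on {0..1::real}" shows "(\<lambda>s. \<bar>g s\<bar>) integrable_on {0..1}"
proof -
  have "(\<lambda>x. norm (g x)) integrable_on {0..1}" using assms by (simp add: absolutely_integrable_on_def)
  then show ?thesis by simp
qed

lemma adm_translate:
  assumes "admissible_length p q L"
  shows "admissible_length (hmul h p) (hmul h q) L"
proof -
  obtain g1 g2 where a: "g1 absolutely_integrable_on {0..1}" "g2 absolutely_integrable_on {0..1}"
    and e: "(C1 p g1 1, C2 p g2 1, snd (snd p) + integral {0..1} (FF p g1 g2)) = q"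
    and L: "L = integral {0..1} (\<lambda>s. \<bar>g1 s\<bar> + \<bar>g2 s\<bar>)"
    using assms unfolding adm_iff by blast
  obtain h1 h2 h3 where h: "h = (h1, h2, h3)" by (cases h) auto
  obtain p1 p2 p3 where p: "p = (p1, p2, p3)" by (cases p) auto
  have i1: "g1 integrable_on {0..1}" "g2 integrable_on {0..1}" using a ai_int by auto
  have iF: "FF p g1 g2 integrable_on {0..1}" using FF_int a by blast
  have FFh: "FF (hmul h p) g1 g2 = (\<lambda>s. FF p g1 g2 s + ((h1/2) * g2 s - (h2/2) * g1 s))"
    by (rule ext) (simp add: FF_def C1_def C2_def h p hmul_def algebra_simps add_divide_distrib diff_divide_distrib)
  have "integral {0..1} (FF (hmul h p) g1 g2) =
        integral {0..1} (FF p g1 g2) + ((h1/2) * integral {0..1} g2 - (h2/2) * integral {0..1} g1)"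
  proof -
    have m1: "(\<lambda>s. (h1/2) * g2 s) integrable_on {0..1}" "(\<lambda>s. (h2/2) * g1 s) integrable_on {0..1}"
      using i1 by (auto intro: integrable_on_mult_right)
    have m2: "(\<lambda>s. (h1/2) * g2 s - (h2/2) * g1 s) integrable_on {0..1}"
      by (rule integrable_diff[OF m1])
    have "integral {0..1} (FF (hmul h p) g1 g2) = integral {0..1} (FF p g1 g2) + integral {0..1} (\<lambda>s. (h1/2) * g2 s - (h2/2) * g1 s)"
      unfolding FFh by (rule integral_add[OF iF m2])
    also have "integral {0..1} (\<lambda>s. (h1/2) * g2 s - (h2/2) * g1 s) = integral {0..1} (\<lambda>s. (h1/2) * g2 s) - integral {0..1} (\<lambda>s. (h2/2) * g1 s)"
      by (rule integral_diff[OF m1])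
    also have "\<dots> = (h1/2) * integral {0..1} g2 - (h2/2) * integral {0..1} g1"
      by (simp only: integral_mult_right)
    finally show ?thesis .
  qed
  moreover have "C1 p g1 1 = p1 + integral {0..1} g1" "C2 p g2 1 = p2 + integral {0..1} g2"
    by (simp_all add: C1_def C2_def p)
  ultimately have "(C1 (hmul h p) g1 1, C2 (hmul h p) g2 1, snd (snd (hmul h p)) + integral {0..1} (FF (hmul h p) g1 g2)) = hmul h q"
    using e[symmetric] by (simp add: C1_def C2_def h p hmul_def field_simps)
  then show ?thesis unfolding adm_iff using a L by blast
qed

lemma adm_concat:
  assumes A: "admissible_length p q L1" and B: "admissible_length q r L2"
  shows "admissible_length p r (L1 + L2)"
proof -
  obtain g1 g2 where a: "g1 absolutely_integrable_on {0..1}" "g2 absolutely_integrable_on {0..1}"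
    and e: "(C1 p g1 1, C2 p g2 1, snd (snd p) + integral {0..1} (FF p g1 g2)) = q"
    and L1: "L1 = integral {0..1} (\<lambda>s. \<bar>g1 s\<bar> + \<bar>g2 s\<bar>)"
    using A unfolding adm_iff by blast
  obtain h1 h2 where b: "h1 absolutely_integrable_on {0..1}" "h2 absolutely_integrable_on {0..1}"
    and f: "(C1 q h1 1, C2 q h2 1, snd (snd q) + integral {0..1} (FF q h1 h2)) = r"
    and L2: "L2 = integral {0..1} (\<lambda>s. \<bar>h1 s\<bar> + \<bar>h2 s\<bar>)"
    using B unfolding adm_iff by blast
  have ia: "g1 integrable_on {0..1}" "g2 integrable_on {0..1}" using a ai_int by auto
  have ib: "h1 integrable_on {0..1}" "h2 integrable_on {0..1}" using b ai_int by auto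
  define G1 where "G1 = cat g1 h1"
  define G2 where "G2 = cat g2 h2"
  have q1: "fst q = fst p + integral {0..1} g1" using e by (auto simp: C1_def)
  have q2: "fst (snd q) = fst (snd p) + integral {0..1} g2" using e by (auto simp: C2_def)
  have q3: "snd (snd q) = snd (snd p) + integral {0..1} (FF p g1 g2)" using e by auto
  have r1: "fst r = fst q + integral {0..1} h1" using f by (auto simp: C1_def)
  have r2: "fst (snd r) = fst (snd q) + integral {0..1} h2" using f by (auto simp: C2_def)
  have r3: "snd (snd r) = snd (snd q) + integral {0..1} (FF q h1 h2)" using f by auto
  have CG1: "C1 p G1 t = (if t \<le> 1/2 then C1 p g1 (2*t) else C1 q h1 (2*t-1))" if "0 \<le> t" "t \<le> 1" for t
    using cat_integral[OF ia(1) ib(1) that] q1 by (simp add: C1_def G1_def)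
  have CG2: "C2 p G2 t = (if t \<le> 1/2 then C2 p g2 (2*t) else C2 q h2 (2*t-1))" if "0 \<le> t" "t \<le> 1" for t
    using cat_integral[OF ia(2) ib(2) that] q2 by (simp add: C2_def G2_def)
  have FG: "FF p G1 G2 s = cat (FF p g1 g2) (FF q h1 h2) s" if "s \<in> {0..1}" for s
  proof (cases "s \<le> 1/2")
    case True
    have e1: "C1 p G1 s = C1 p g1 (2 * s)" "C2 p G2 s = C2 p g2 (2 * s)" using CG1[of s] CG2[of s] that True by auto
    have e2: "G1 s = 2 * g1 (2 * s)" "G2 s = 2 * g2 (2 * s)" using True by (simp_all add: G1_def G2_def cat_def)
    show ?thesis unfolding FF_def e1 e2 using True by (simp add: cat_def FF_def algebra_simps)
  next
    case False
    have e1: "C1 p G1 s = C1 q h1 (2 * s-1)" "C2 p G2 s = C2 q h2 (2 * s-1)" using CG1[of s] CG2[of s] that False by auto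
    have e2: "G1 s = 2 * h1 (2 * s-1)" "G2 s = 2 * h2 (2 * s-1)" using False by (simp_all add: G1_def G2_def cat_def)
    show ?thesis unfolding FF_def e1 e2 using False by (simp add: cat_def FF_def algebra_simps)
  qed
  have iFa: "FF p g1 g2 integrable_on {0..1}" using FF_int a by blast
  have iFb: "FF q h1 h2 integrable_on {0..1}" using FF_int b by blast
  have IF: "integral {0..1} (FF p G1 G2) = integral {0..1} (FF p g1 g2) + integral {0..1} (FF q h1 h2)"
    using Henstock_Kurzweil_Integration.integral_cong[of "{0..1}" "FF p G1 G2", OF FG] cat_integral1[OF iFa iFb] by simp
  have aG: "G1 absolutely_integrable_on {0..1}" "G2 absolutely_integrable_on {0..1}"
    unfolding G1_def G2_def using cat_absint a b by auto
  have C11: "C1 p G1 1 = fst r" using CG1[of 1] r1 by (simp add: C1_def)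
  have C21: "C2 p G2 1 = fst (snd r)" using CG2[of 1] r2 by (simp add: C2_def)
  have C31: "snd (snd p) + integral {0..1} (FF p G1 G2) = snd (snd r)" using IF q3 r3 by simp
  have Leq: "(\<lambda>s. \<bar>G1 s\<bar> + \<bar>G2 s\<bar>) = cat (\<lambda>s. \<bar>g1 s\<bar> + \<bar>g2 s\<bar>) (\<lambda>s. \<bar>h1 s\<bar> + \<bar>h2 s\<bar>)"
    by (rule ext) (simp add: G1_def G2_def cat_def abs_mult)
  have ila: "(\<lambda>s. \<bar>g1 s\<bar> + \<bar>g2 s\<bar>) integrable_on {0..1}" using a ai_absint integrable_add by blast
  have ilb: "(\<lambda>s. \<bar>h1 s\<bar> + \<bar>h2 s\<bar>) integrable_on {0..1}" using b ai_absint integrable_add by blast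
  have "integral {0..1} (\<lambda>s. \<bar>G1 s\<bar> + \<bar>G2 s\<bar>) = L1 + L2"
    unfolding Leq L1 L2 by (rule cat_integral1[OF ila ilb])
  moreover have "(C1 p G1 1, C2 p G2 1, snd (snd p) + integral {0..1} (FF p G1 G2)) = r"
    using C11 C21 C31 by (simp add: prod_eq_iff)
  ultimately show ?thesis unfolding adm_iff using aG by metis
qed

lemma adm_word:
  assumes "set ws \<subseteq> std"
  shows "admissible_length (foldr hmul ws hzero) hzero (real (length ws))"
  using assms
proof (induction ws)
  case Nil
  then show ?case using adm_zero by simp
next
  case (Cons s ws)
  have ih: "admissible_length (foldr hmul ws hzero) hzero (real (length ws))" using Cons by simp
  have "admissible_length (hmul s (foldr hmul ws hzero)) (hmul s hzero) (real (length ws))"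
    by (rule adm_translate[OF ih])
  then have "admissible_length (hmul s (foldr hmul ws hzero)) s (real (length ws))" by simp
  from adm_concat[OF this adm_seg] Cons.prems show ?case by (simp add: add.commute)
qed


lemma alg_bound:
  fixes x y z l1 l2 a1 b1 a2 b2 :: real
  assumes "a1 \<le> 0" "a1 \<le> x" "0 \<le> b1" "x \<le> b1" "a2 \<le> 0" "a2 \<le> y" "0 \<le> b2" "y \<le> b2"
    and w1: "2*(b1 - a1) \<le> l1 + \<bar>x\<bar>" and w2: "2*(b2 - a2) \<le> l2 + \<bar>y\<bar>"
    and "l1 \<ge> 0" "l2 \<ge> 0"
    and A: "2*z \<le> (b1-a1)/2 * l2 + (b2-a2)/2 * l1 + (a1+b1)/2*y - (a2+b2)/2*x"
  shows "4*z + 2*\<bar>x*y\<bar> \<le> (l1 + \<bar>x\<bar>)*(l2+\<bar>y\<bar>)"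
proof -
  have h1: "(a1+b1)/2*y \<le> (b1-a1)/2*\<bar>y\<bar> + min 0 (x*y)"
  proof (cases "y \<ge> 0")
    case True
    have "a1 * y \<le> min 0 x * y" using True assms by (intro mult_right_mono) auto
    also have "min 0 x * y = min 0 (x*y)"
    proof (cases "x \<ge> 0")
      case x: True
      then have "x * y \<ge> 0" using True by simp
      then show ?thesis using x by (simp add: min_def)
    next
      case x: False
      then have "x * y \<le> 0" using True by (simp add: mult_nonpos_nonneg)
      then show ?thesis using x by (simp add: min_def)
    qed
    finally have k: "a1 * y \<le> min 0 (x*y)" .
    have "(a1+b1)/2*y = (b1-a1)/2*\<bar>y\<bar> + a1*y" using True by (simp add: field_simps)
    then show ?thesis using k by linarith
  next
    case False
    have "b1 * y \<le> max 0 x * y" using False assms by (intro mult_right_mono_neg) auto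
    also have "max 0 x * y = min 0 (x*y)"
    proof (cases "x \<ge> 0")
      case x: True
      then have "x * y \<le> 0" using False by (simp add: mult_nonneg_nonpos)
      then show ?thesis using x by (simp add: min_def max_def)
    next
      case x: False
      then have "x * y \<ge> 0" using False by (simp add: mult_nonpos_nonpos)
      then show ?thesis using x by (simp add: min_def max_def)
    qed
    finally have k: "b1 * y \<le> min 0 (x*y)" .
    have "(a1+b1)/2*y = (b1-a1)/2*\<bar>y\<bar> + b1*y" using False by (simp add: field_simps)
    then show ?thesis using k by linarith
  qed
  have h2: "-(a2+b2)/2*x \<le> (b2-a2)/2*\<bar>x\<bar> + min 0 (-(x*y))"
  proof (cases "x \<ge> 0")
    case True
    have "max 0 y * x \<le> b2 * x" using True assms by (intro mult_right_mono) auto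
    moreover have "max 0 y * x = max 0 (x*y)"
    proof (cases "y \<ge> 0")
      case y: True
      then have "x * y \<ge> 0" using True by simp
      then show ?thesis using y by (simp add: max_def mult.commute)
    next
      case y: False
      then have "x * y \<le> 0" using True by (simp add: mult_nonneg_nonpos)
      then show ?thesis using y by (simp add: max_def)
    qed
    moreover have "min 0 (-(x*y)) = - max 0 (x*y)" by (simp add: min_def max_def)
    moreover have "-(a2+b2)/2*x = (b2-a2)/2*\<bar>x\<bar> - b2*x" using True by (simp add: field_simps)
    ultimately show ?thesis by linarith
  next
    case False
    have "min 0 y * x \<le> a2 * x" using False assms by (intro mult_right_mono_neg) auto
    moreover have "min 0 y * x = max 0 (x*y)"
    proof (cases "y \<ge> 0")
      case y: True
      then have "x * y \<le> 0" using False by (simp add: mult_nonpos_nonneg)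
      then show ?thesis using y by (simp add: min_def max_def)
    next
      case y: False
      then have "x * y \<ge> 0" using False by (simp add: mult_nonpos_nonpos)
      then show ?thesis using y by (simp add: min_def max_def mult.commute)
    qed
    moreover have "min 0 (-(x*y)) = - max 0 (x*y)" by (simp add: min_def max_def)
    moreover have "-(a2+b2)/2*x = (b2-a2)/2*\<bar>x\<bar> - a2*x" using False by (simp add: field_simps)
    ultimately show ?thesis by linarith
  qed
  have h3: "min 0 (x*y) + min 0 (-(x*y)) = - \<bar>x*y\<bar>" by (simp add: min_def abs_if)
  have e: "(b1-a1)*(l2+\<bar>y\<bar>) + (b2-a2)*(l1+\<bar>x\<bar>) = 2*((b1-a1)/2*l2) + 2*((b2-a2)/2*l1) + 2*((b1-a1)/2*\<bar>y\<bar>) + 2*((b2-a2)/2*\<bar>x\<bar>)"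
    by (simp add: field_simps)
  have s1: "4*z + 2*\<bar>x*y\<bar> \<le> (b1-a1)*(l2+\<bar>y\<bar>) + (b2-a2)*(l1+\<bar>x\<bar>)"
    using A h1 h2 h3 e by argo
  have s2: "(b1-a1)*(l2+\<bar>y\<bar>) \<le> ((l1+\<bar>x\<bar>)/2)*(l2+\<bar>y\<bar>)"
    using w1 assms by (intro mult_right_mono) auto
  have s3: "(b2-a2)*(l1+\<bar>x\<bar>) \<le> ((l2+\<bar>y\<bar>)/2)*(l1+\<bar>x\<bar>)"
    using w2 assms by (intro mult_right_mono) auto
  have e2: "((l1+\<bar>x\<bar>)/2)*(l2+\<bar>y\<bar>) + ((l2+\<bar>y\<bar>)/2)*(l1+\<bar>x\<bar>) = (l1+\<bar>x\<bar>)*(l2+\<bar>y\<bar>)"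
    by (simp add: field_simps)
  show ?thesis using s1 s2 s3 e2 by linarith
qed

lemma arith_w1:
  fixes I0 I1 I2 Ie L x A B C X :: real
  assumes "A + B + C \<le> L" "- (I1 - I0) \<le> A" "I2 - I1 \<le> B" "- (Ie - I2) \<le> C" "-x \<le> X" "x + Ie = 0" "I0 = 0"
  shows "2 * (x + I2 - (x + I1)) \<le> L + X"
  using assms by argo

lemma arith_w2:
  fixes I0 I1 I2 Ie L x A B C X :: real
  assumes "A + B + C \<le> L" "I2 - I0 \<le> A" "- (I1 - I2) \<le> B" "Ie - I1 \<le> C" "x \<le> X" "x + Ie = 0" "I0 = 0"
  shows "2 * (x + I2 - (x + I1)) \<le> L + X"
  using assms by argo

lemma seg_bound:
  fixes g :: "real \<Rightarrow> real"
  assumes ai: "g absolutely_integrable_on {0..1}" and ab: "0 \<le> a" "a \<le> b" "b \<le> 1"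
  shows "\<bar>integral {0..b} g - integral {0..a} g\<bar> \<le> integral {a..b} (\<lambda>s. \<bar>g s\<bar>)"
proof -
  have gi: "g integrable_on {0..1}" using ai ai_int by blast
  have ag: "(\<lambda>s. \<bar>g s\<bar>) integrable_on {0..1}" using ai ai_absint by blast
  have gb: "g integrable_on {0..b}" by (rule integrable_subinterval_real[OF gi]) (use ab in auto)
  have "integral {0..a} g + integral {a..b} g = integral {0..b} g"
    by (rule Henstock_Kurzweil_Integration.integral_combine[OF _ _ gb]) (use ab in auto)
  then have e: "integral {0..b} g - integral {0..a} g = integral {a..b} g" by simp
  have gab: "g integrable_on {a..b}" by (rule integrable_subinterval_real[OF gi]) (use ab in auto)
  have agab: "(\<lambda>s. \<bar>g s\<bar>) integrable_on {a..b}" by (rule integrable_subinterval_real[OF ag]) (use ab in auto)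
  have "norm (integral {a..b} g) \<le> integral {a..b} (\<lambda>s. \<bar>g s\<bar>)"
    by (rule integral_norm_bound_integral[OF gab agab]) simp
  then show ?thesis using e by simp
qed

lemma var_bound:
  fixes g :: "real \<Rightarrow> real"
  assumes ai: "g absolutely_integrable_on {0..1}" and uv: "0 \<le> u" "u \<le> v" "v \<le> 1"
  shows "\<bar>integral {0..u} g - integral {0..0} g\<bar> + \<bar>integral {0..v} g - integral {0..u} g\<bar>
          + \<bar>integral {0..1} g - integral {0..v} g\<bar> \<le> integral {0..1} (\<lambda>s. \<bar>g s\<bar>)"
proof -
  have ag: "(\<lambda>s. \<bar>g s\<bar>) integrable_on {0..1}" using ai ai_absint by blast
  have agv: "(\<lambda>s. \<bar>g s\<bar>) integrable_on {0..v}" by (rule integrable_subinterval_real[OF ag]) (use uv in auto)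
  have c1: "integral {0..u} (\<lambda>s. \<bar>g s\<bar>) + integral {u..v} (\<lambda>s. \<bar>g s\<bar>) = integral {0..v} (\<lambda>s. \<bar>g s\<bar>)"
    by (rule Henstock_Kurzweil_Integration.integral_combine[OF _ _ agv]) (use uv in auto)
  have c2: "integral {0..v} (\<lambda>s. \<bar>g s\<bar>) + integral {v..1} (\<lambda>s. \<bar>g s\<bar>) = integral {0..1} (\<lambda>s. \<bar>g s\<bar>)"
    by (rule Henstock_Kurzweil_Integration.integral_combine[OF _ _ ag]) (use uv in auto)
  have "\<bar>integral {0..u} g - integral {0..0} g\<bar> \<le> integral {0..u} (\<lambda>s. \<bar>g s\<bar>)"
    by (rule seg_bound[OF ai]) (use uv in auto)
  moreover have "\<bar>integral {0..v} g - integral {0..u} g\<bar> \<le> integral {u..v} (\<lambda>s. \<bar>g s\<bar>)"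
    by (rule seg_bound[OF ai]) (use uv in auto)
  moreover have "\<bar>integral {0..1} g - integral {0..v} g\<bar> \<le> integral {v..1} (\<lambda>s. \<bar>g s\<bar>)"
    by (rule seg_bound[OF ai]) (use uv in auto)
  ultimately show ?thesis using c1 c2 by linarith
qed

lemma width_bound:
  fixes g :: "real \<Rightarrow> real" and x :: real
  assumes ai: "g absolutely_integrable_on {0..1}"
    and c0: "x + integral {0..1} g = 0"
    and t1: "t1 \<in> {0..1}" and t2: "t2 \<in> {0..1}"
  shows "2 * ((x + integral {0..t2} g) - (x + integral {0..t1} g)) \<le> integral {0..1} (\<lambda>s. \<bar>g s\<bar>) + \<bar>x\<bar>"
proof -
  have z: "integral {0..0} g = 0" by simp
  consider "t1 \<le> t2" | "t2 \<le> t1" by linarith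
  then show ?thesis
  proof cases
    case 1
    have "\<bar>integral {0..t1} g - integral {0..0} g\<bar> + \<bar>integral {0..t2} g - integral {0..t1} g\<bar>
          + \<bar>integral {0..1} g - integral {0..t2} g\<bar> \<le> integral {0..1} (\<lambda>s. \<bar>g s\<bar>)"
      using var_bound[of g t1 t2] ai 1 t1 t2 by auto
    moreover note abs_ge_minus_self[of "integral {0..t1} g - integral {0..0} g"]
      abs_ge_self[of "integral {0..t2} g - integral {0..t1} g"]
      abs_ge_minus_self[of "integral {0..1} g - integral {0..t2} g"] abs_ge_minus_self[of x]
    ultimately show ?thesis using c0 z by (rule arith_w1)
  next
    case 2
    have "\<bar>integral {0..t2} g - integral {0..0} g\<bar> + \<bar>integral {0..t1} g - integral {0..t2} g\<bar>
          + \<bar>integral {0..1} g - integral {0..t1} g\<bar> \<le> integral {0..1} (\<lambda>s. \<bar>g s\<bar>)"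
      using var_bound[of g t2 t1] ai 2 t1 t2 by auto
    moreover note abs_ge_self[of "integral {0..t2} g - integral {0..0} g"]
      abs_ge_minus_self[of "integral {0..t1} g - integral {0..t2} g"]
      abs_ge_self[of "integral {0..1} g - integral {0..t1} g"] abs_ge_self[of x]
    ultimately show ?thesis using c0 z by (rule arith_w2)
  qed
qed


lemma area_bound:
  fixes c g :: "real \<Rightarrow> real" and a b :: real
  assumes c: "continuous_on {0..1} c" and ai: "g absolutely_integrable_on {0..1}"
    and ab: "\<And>s. s \<in> {0..1} \<Longrightarrow> a \<le> c s \<and> c s \<le> b"
  shows "\<bar>integral {0..1} (\<lambda>s. c s * g s) - (a+b)/2 * integral {0..1} g\<bar> \<le> (b-a)/2 * integral {0..1} (\<lambda>s. \<bar>g s\<bar>)"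
proof -
  have gi: "g integrable_on {0..1}" using ai ai_int by blast
  have ag: "(\<lambda>s. \<bar>g s\<bar>) integrable_on {0..1}" using ai ai_absint by blast
  have cm: "continuous_on {0..1} (\<lambda>s. c s - (a+b)/2)" by (intro continuous_intros c)
  have pi: "(\<lambda>s. (c s - (a+b)/2) * g s) integrable_on {0..1}"
    using contprod_absint[OF cm ai] ai_int by blast
  have ci: "(\<lambda>s. c s * g s) integrable_on {0..1}"
    using contprod_absint[OF c ai] ai_int by blast
  have mi: "(\<lambda>s. (a+b)/2 * g s) integrable_on {0..1}" using gi by (rule integrable_on_mult_right)
  have "integral {0..1} (\<lambda>s. (c s - (a+b)/2) * g s) = integral {0..1} (\<lambda>s. c s * g s - (a+b)/2 * g s)"
    by (simp add: algebra_simps)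
  also have "\<dots> = integral {0..1} (\<lambda>s. c s * g s) - integral {0..1} (\<lambda>s. (a+b)/2 * g s)"
    by (rule integral_diff[OF ci mi])
  also have "integral {0..1} (\<lambda>s. (a+b)/2 * g s) = (a+b)/2 * integral {0..1} g"
    by (rule integral_mult_right)
  finally have e: "integral {0..1} (\<lambda>s. (c s - (a+b)/2) * g s) = integral {0..1} (\<lambda>s. c s * g s) - (a+b)/2 * integral {0..1} g" .
  have bi: "(\<lambda>s. (b-a)/2 * \<bar>g s\<bar>) integrable_on {0..1}" using ag by (rule integrable_on_mult_right)
  have "norm (integral {0..1} (\<lambda>s. (c s - (a+b)/2) * g s)) \<le> integral {0..1} (\<lambda>s. (b-a)/2 * \<bar>g s\<bar>)"
  proof (rule integral_norm_bound_integral[OF pi bi])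
    fix s :: real assume s: "s \<in> {0..1}"
    have "\<bar>c s - (a+b)/2\<bar> \<le> (b-a)/2" unfolding abs_le_iff using ab[OF s] by (auto simp: field_simps)
    then have "\<bar>c s - (a+b)/2\<bar> * \<bar>g s\<bar> \<le> (b-a)/2 * \<bar>g s\<bar>" by (rule mult_right_mono) simp
    then show "norm ((c s - (a+b)/2) * g s) \<le> (b-a)/2 * \<bar>g s\<bar>" by (simp add: abs_mult)
  qed
  then show ?thesis using e by simp
qed

lemma curve_bound:
  fixes x y z L :: real
  assumes adm: "admissible_length (x, y, z) hzero L"
  shows "\<exists>l1 l2. L = l1 + l2 \<and> \<bar>x\<bar> \<le> l1 \<and> \<bar>y\<bar> \<le> l2 \<and> 4*z + 2*\<bar>x*y\<bar> \<le> (l1 + \<bar>x\<bar>) * (l2 + \<bar>y\<bar>)"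
proof -
  define p where "p = (x, y, z)"
  obtain g1 g2 where a: "g1 absolutely_integrable_on {0..1}" "g2 absolutely_integrable_on {0..1}"
    and e: "(C1 p g1 1, C2 p g2 1, snd (snd p) + integral {0..1} (FF p g1 g2)) = hzero"
    and L: "L = integral {0..1} (\<lambda>s. \<bar>g1 s\<bar> + \<bar>g2 s\<bar>)"
    using adm unfolding adm_iff p_def by blast
  have i1: "g1 integrable_on {0..1}" "g2 integrable_on {0..1}" using a ai_int by auto
  have ia: "(\<lambda>s. \<bar>g1 s\<bar>) integrable_on {0..1}" "(\<lambda>s. \<bar>g2 s\<bar>) integrable_on {0..1}" using a ai_absint by auto
  define l1 where "l1 = integral {0..1} (\<lambda>s. \<bar>g1 s\<bar>)"
  define l2 where "l2 = integral {0..1} (\<lambda>s. \<bar>g2 s\<bar>)"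
  have Lsum: "L = l1 + l2" unfolding L l1_def l2_def by (rule integral_add[OF ia])
  have l1p: "l1 \<ge> 0" unfolding l1_def by (rule integral_nonneg[OF ia(1)]) simp
  have l2p: "l2 \<ge> 0" unfolding l2_def by (rule integral_nonneg[OF ia(2)]) simp
  define c1 where "c1 = C1 p g1"
  define c2 where "c2 = C2 p g2"
  have c1c: "continuous_on {0..1} c1" unfolding c1_def by (rule C1_cont[OF i1(1)])
  have c2c: "continuous_on {0..1} c2" unfolding c2_def by (rule C2_cont[OF i1(2)])
  have c1t: "c1 t = x + integral {0..t} g1" for t by (simp add: c1_def C1_def p_def)
  have c2t: "c2 t = y + integral {0..t} g2" for t by (simp add: c2_def C2_def p_def)
  have e1: "x + integral {0..1} g1 = 0" using e by (simp add: C1_def p_def hzero_def)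
  have e2: "y + integral {0..1} g2 = 0" using e by (simp add: C2_def p_def hzero_def)
  have e3: "z + integral {0..1} (FF p g1 g2) = 0" using e by (simp add: p_def hzero_def)
  have c10: "c1 0 = x" "c1 1 = 0" using e1 by (simp_all add: c1t)
  have c20: "c2 0 = y" "c2 1 = 0" using e2 by (simp_all add: c2t)
  obtain t1 where t1: "t1 \<in> {0..1}" "\<forall>s\<in>{0..1}. c1 t1 \<le> c1 s"
    using continuous_attains_inf[OF compact_Icc _ c1c] by auto
  obtain t2 where t2: "t2 \<in> {0..1}" "\<forall>s\<in>{0..1}. c1 s \<le> c1 t2"
    using continuous_attains_sup[OF compact_Icc _ c1c] by auto
  obtain u1 where u1: "u1 \<in> {0..1}" "\<forall>s\<in>{0..1}. c2 u1 \<le> c2 s"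
    using continuous_attains_inf[OF compact_Icc _ c2c] by auto
  obtain u2 where u2: "u2 \<in> {0..1}" "\<forall>s\<in>{0..1}. c2 s \<le> c2 u2"
    using continuous_attains_sup[OF compact_Icc _ c2c] by auto
  define a1 where "a1 = c1 t1"
  define b1 where "b1 = c1 t2"
  define a2 where "a2 = c2 u1"
  define b2 where "b2 = c2 u2"
  have r1: "a1 \<le> 0" "a1 \<le> x" "0 \<le> b1" "x \<le> b1"
    using t1(2)[rule_format, of 0] t1(2)[rule_format, of 1] t2(2)[rule_format, of 0] t2(2)[rule_format, of 1] c10
    unfolding a1_def b1_def by auto
  have r2: "a2 \<le> 0" "a2 \<le> y" "0 \<le> b2" "y \<le> b2"
    using u1(2)[rule_format, of 0] u1(2)[rule_format, of 1] u2(2)[rule_format, of 0] u2(2)[rule_format, of 1] c20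
    unfolding a2_def b2_def by auto
  have w1: "2*(b1 - a1) \<le> l1 + \<bar>x\<bar>"
    using width_bound[OF a(1) e1 t1(1) t2(1)] unfolding a1_def b1_def c1t l1_def .
  have w2: "2*(b2 - a2) \<le> l2 + \<bar>y\<bar>"
    using width_bound[OF a(2) e2 u1(1) u2(1)] unfolding a2_def b2_def c2t l2_def .
  define A where "A = integral {0..1} (\<lambda>s. c1 s * g2 s)"
  define B where "B = integral {0..1} (\<lambda>s. c2 s * g1 s)"
  have Ai: "(\<lambda>s. c1 s * g2 s) integrable_on {0..1}" using contprod_absint[OF c1c a(2)] ai_int by blast
  have Bi: "(\<lambda>s. c2 s * g1 s) integrable_on {0..1}" using contprod_absint[OF c2c a(1)] ai_int by blast
  have "FF p g1 g2 = (\<lambda>s. (c1 s * g2 s - c2 s * g1 s) / 2)" by (rule ext) (simp add: FF_def c1_def c2_def)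
  then have "integral {0..1} (FF p g1 g2) = integral {0..1} (\<lambda>s. c1 s * g2 s - c2 s * g1 s) / 2" by simp
  also have "integral {0..1} (\<lambda>s. c1 s * g2 s - c2 s * g1 s) = A - B" unfolding A_def B_def by (rule integral_diff[OF Ai Bi])
  finally have zAB: "2*z = B - A" using e3 by simp
  have bA: "\<bar>A - (a1+b1)/2 * integral {0..1} g2\<bar> \<le> (b1-a1)/2 * l2"
    unfolding A_def l2_def
    by (rule area_bound[OF c1c a(2)]) (use t1 t2 in \<open>auto simp: a1_def b1_def\<close>)
  have bB: "\<bar>B - (a2+b2)/2 * integral {0..1} g1\<bar> \<le> (b2-a2)/2 * l1"
    unfolding B_def l1_def
    by (rule area_bound[OF c2c a(1)]) (use u1 u2 in \<open>auto simp: a2_def b2_def\<close>)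
  have g2y: "integral {0..1} g2 = -y" and g1x: "integral {0..1} g1 = -x" using e1 e2 by linarith+
  have m1: "(a1+b1)/2 * integral {0..1} g2 = - ((a1+b1)/2*y)" unfolding g2y by simp
  have m2: "(a2+b2)/2 * integral {0..1} g1 = - ((a2+b2)/2*x)" unfolding g1x by simp
  have bA': "- (A + (a1+b1)/2*y) \<le> (b1-a1)/2 * l2"
    using bA abs_ge_minus_self[of "A + (a1+b1)/2*y"] unfolding m1 by simp
  have bB': "B + (a2+b2)/2*x \<le> (b2-a2)/2 * l1"
    using bB abs_ge_self[of "B + (a2+b2)/2*x"] unfolding m2 by simp
  have Az: "2*z \<le> (b1-a1)/2 * l2 + (b2-a2)/2 * l1 + (a1+b1)/2*y - (a2+b2)/2*x"
    using zAB bA' bB' by linarith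
  have fin: "4*z + 2*\<bar>x*y\<bar> \<le> (l1 + \<bar>x\<bar>)*(l2+\<bar>y\<bar>)"
    by (rule alg_bound[OF r1 r2 w1 w2 l1p l2p Az])
  have "\<bar>x\<bar> \<le> l1" using r1 w1 by (simp add: abs_le_iff) linarith?
  moreover have "\<bar>y\<bar> \<le> l2" using r2 w2 by (simp add: abs_le_iff) linarith?
  ultimately show ?thesis using Lsum fin by blast
qed


lemma amgm_bound:
  fixes P Q Z :: real
  assumes "P \<ge> 0" "Q \<ge> 0" "P * Q \<ge> Z" "Z \<ge> 0"
  shows "2 * sqrt Z \<le> P + Q"
proof -
  have e1: "(2 * sqrt Z)^2 = 4 * Z" using assms(4) by (simp add: power_mult_distrib)
  have e2: "(P + Q)^2 - 4 * (P * Q) = (P - Q)^2" by (simp add: power2_eq_square algebra_simps)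
  have "0 \<le> (P - Q)^2" by (rule zero_le_power2)
  then have sq: "(2 * sqrt Z)^2 \<le> (P + Q)^2" using e1 e2 assms(3) by linarith
  show ?thesis by (rule power2_le_imp_le[OF sq]) (use assms in simp)
qed

lemma caseA:
  fixes X Y Zi :: int
  assumes "X \<ge> 0" "Y \<ge> 0" "X^2 \<le> Zi" "Y^2 \<le> Zi"
  shows "\<exists>a b m. a \<ge> X \<and> b \<ge> Y \<and> Zi \<le> a * b \<and> m > real_of_int (a + b) - 1 \<and>
           (\<forall>P Q. P \<ge> real_of_int X \<longrightarrow> Q \<ge> real_of_int Y \<longrightarrow> P * Q \<ge> real_of_int Zi \<longrightarrow> P + Q \<ge> m)"
proof -
  have Z0: "Zi \<ge> 0" using assms(3) zero_le_power2[of X] by linarith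
  define s where "s = sqrt (real_of_int Zi)"
  have s0: "s \<ge> 0" unfolding s_def using Z0 by simp
  have s2: "s^2 = real_of_int Zi" unfolding s_def using Z0 by simp
  define k where "k = ceiling (2 * s)"
  have k1: "2 * s \<le> real_of_int k" unfolding k_def by simp
  have k2: "real_of_int k < 2 * s + 1" unfolding k_def using ceiling_correct[of "2 * s"] by linarith
  have Xs: "real_of_int X \<le> s" unfolding s_def
  proof (rule real_le_rsqrt)
    have "real_of_int (X^2) \<le> real_of_int Zi" using assms(3) by (simp only: of_int_le_iff)
    then show "(real_of_int X)^2 \<le> real_of_int Zi" by simp
  qed
  have Ys: "real_of_int Y \<le> s" unfolding s_def
  proof (rule real_le_rsqrt)
    have "real_of_int (Y^2) \<le> real_of_int Zi" using assms(4) by (simp only: of_int_le_iff)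
    then show "(real_of_int Y)^2 \<le> real_of_int Zi" by simp
  qed
  define a where "a = k div 2"
  define b where "b = k - k div 2"
  have "2 * X \<le> k" using Xs k1 by linarith
  then have aX: "a \<ge> X" unfolding a_def by presburger
  have "2 * Y \<le> k" using Ys k1 by linarith
  then have bY: "b \<ge> Y" unfolding b_def by presburger
  have k0: "k \<ge> 0" using k1 s0 by linarith
  have "real_of_int (k^2) \<ge> 4 * real_of_int Zi"
  proof -
    have "(2 * s)^2 \<le> (real_of_int k)^2" using k1 s0 by (intro power_mono) simp_all
    then show ?thesis using s2 by (simp add: power_mult_distrib)
  qed
  then have "real_of_int (4 * Zi) \<le> real_of_int (k^2)" by simp
  then have kZ: "k^2 \<ge> 4 * Zi" by (simp only: of_int_le_iff)
  have "4 * (a * b) \<ge> k^2 - 1"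
  proof (cases "even k")
    case True
    then obtain t where "k = 2 * t" by blast
    then show ?thesis unfolding a_def b_def by (simp add: power2_eq_square)
  next
    case False
    then obtain t where "k = 2 * t + 1" using oddE by blast
    then show ?thesis unfolding a_def b_def by (simp add: power2_eq_square algebra_simps)
  qed
  then have ab: "Zi \<le> a * b" using kZ by linarith
  have m: "2 * s > real_of_int (a + b) - 1" using k2 unfolding a_def b_def by simp
  have "\<forall>P Q. P \<ge> real_of_int X \<longrightarrow> Q \<ge> real_of_int Y \<longrightarrow> P * Q \<ge> real_of_int Zi \<longrightarrow> P + Q \<ge> 2 * s"
  proof (intro allI impI)
    fix P Q :: real
    assume "P \<ge> real_of_int X" "Q \<ge> real_of_int Y" "P * Q \<ge> real_of_int Zi"
    then show "P + Q \<ge> 2 * s" unfolding s_def using assms Z0 by (intro amgm_bound) simp_all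
  qed
  then show ?thesis using aX bY ab m by blast
qed

lemma caseB:
  fixes X Y Zi :: int
  assumes "X \<ge> 0" "Y \<ge> 0" "Zi \<ge> 0" "X^2 > Zi"
  shows "\<exists>b m. b \<ge> Y \<and> Zi \<le> X * b \<and> m > real_of_int (X + b) - 1 \<and>
           (\<forall>P Q. P \<ge> real_of_int X \<longrightarrow> Q \<ge> real_of_int Y \<longrightarrow> P * Q \<ge> real_of_int Zi \<longrightarrow> P + Q \<ge> m)"
proof -
  have X1: "X \<ge> 1"
  proof (rule ccontr)
    assume "\<not> X \<ge> 1" then have "X = 0" using assms by simp
    then show False using assms by simp
  qed
  then have Xp: "real_of_int X > 0" by simp
  define r where "r = real_of_int Zi / real_of_int X"
  define b where "b = max Y (ceiling r)"
  define m where "m = real_of_int X + max (real_of_int Y) r"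
  have bY: "b \<ge> Y" unfolding b_def by simp
  have "real_of_int Zi = real_of_int X * r" unfolding r_def using Xp by simp
  also have "\<dots> \<le> real_of_int X * real_of_int b"
    using Xp unfolding b_def by (intro mult_left_mono) (auto intro: order_trans[OF le_of_int_ceiling])
  finally have "real_of_int Zi \<le> real_of_int (X * b)" by simp
  then have ab: "Zi \<le> X * b" by (simp only: of_int_le_iff)
  have "real_of_int b < max (real_of_int Y) r + 1"
    unfolding b_def using ceiling_correct[of r] by (auto simp: max_def)
  then have mm: "m > real_of_int (X + b) - 1" unfolding m_def by simp
  have "\<forall>P Q. P \<ge> real_of_int X \<longrightarrow> Q \<ge> real_of_int Y \<longrightarrow> P * Q \<ge> real_of_int Zi \<longrightarrow> P + Q \<ge> m"
  proof (intro allI impI)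
    fix P Q :: real
    assume PX: "P \<ge> real_of_int X" and QY: "Q \<ge> real_of_int Y" and PQ: "P * Q \<ge> real_of_int Zi"
    have Pp: "P > 0" using PX Xp by linarith
    have Qr: "Q \<ge> real_of_int Zi / P" using PQ Pp by (simp add: field_simps mult.commute)
    have "X^2 > Zi" using assms by simp
    then have XZ: "real_of_int X * real_of_int X > real_of_int Zi"
      using of_int_less_iff[of Zi "X^2", where 'a=real] by (simp add: power2_eq_square)
    have "0 \<le> (P - real_of_int X) * (P * real_of_int X - real_of_int Zi)"
    proof (rule mult_nonneg_nonneg)
      show "0 \<le> P - real_of_int X" using PX by simp
      have "real_of_int X * real_of_int X \<le> P * real_of_int X" using PX Xp by (intro mult_right_mono) simp_all
      then show "0 \<le> P * real_of_int X - real_of_int Zi" using XZ by linarith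
    qed
    then have "real_of_int X + r \<le> P + real_of_int Zi / P"
      unfolding r_def using Pp Xp by (simp add: field_simps algebra_simps)
    then have h1: "real_of_int X + r \<le> P + Q" using Qr by linarith
    have h2: "real_of_int X + real_of_int Y \<le> P + Q" using PX QY by linarith
    show "P + Q \<ge> m" unfolding m_def using h1 h2 by (simp add: max_def)
  qed
  then show ?thesis using bY ab mm by blast
qed


lemma hmul_fst: "fst (hmul a b) = fst a + fst b"
  by (cases a; cases b) (simp add: hmul_def)

lemma hmul_fst2: "fst (snd (hmul a b)) = fst (snd a) + fst (snd b)"
  by (cases a; cases b) (simp add: hmul_def)

lemma parity_word:
  assumes "set ws \<subseteq> std"
  shows "\<exists>i j::int. fst (foldr hmul ws hzero) = of_int i \<and> fst (snd (foldr hmul ws hzero)) = of_int j \<and> even (int (length ws) + i + j)"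
  using assms
proof (induction ws)
  case Nil
  then show ?case by (intro exI[of _ 0]) (simp add: hzero_def)
next
  case (Cons s ws)
  then obtain i j where ij: "fst (foldr hmul ws hzero) = of_int i" "fst (snd (foldr hmul ws hzero)) = of_int j"
    "even (int (length ws) + i + j)" by auto
  have s: "s \<in> std" using Cons by simp
  have L: "int (length (s # ws)) = int (length ws) + 1" by simp
  have F1: "fst (foldr hmul (s # ws) hzero) = fst s + of_int i" using ij by (simp add: hmul_fst)
  have F2: "fst (snd (foldr hmul (s # ws) hzero)) = fst (snd s) + of_int j" using ij by (simp add: hmul_fst2)
  from s consider "s = (1,0,0)" | "s = (-1,0,0)" | "s = (0,1,0)" | "s = (0,-1,0)" unfolding std_def by blast
  then show ?case
  proof cases
    case 1
    have "even (int (length (s # ws)) + (i+1) + j)" using ij(3) L by presburger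
    then show ?thesis using F1 F2 1 by (intro exI[of _ "i+1"] exI[of _ j]) simp
  next
    case 2
    have "even (int (length (s # ws)) + (i-1) + j)" using ij(3) L by presburger
    then show ?thesis using F1 F2 2 by (intro exI[of _ "i-1"] exI[of _ j]) simp
  next
    case 3
    have "even (int (length (s # ws)) + i + (j+1))" using ij(3) L by presburger
    then show ?thesis using F1 F2 3 by (intro exI[of _ i] exI[of _ "j+1"]) simp
  next
    case 4
    have "even (int (length (s # ws)) + i + (j-1))" using ij(3) L by presburger
    then show ?thesis using F1 F2 4 by (intro exI[of _ i] exI[of _ "j-1"]) simp
  qed
qed

lemma wl_le:
  assumes "set ws \<subseteq> std" "foldr hmul ws hzero = g"
  shows "word_length g \<le> length ws"
  unfolding word_length_def by (rule Least_le) (use assms in blast)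

lemma wl_ex:
  assumes "set ws \<subseteq> std" "foldr hmul ws hzero = g"
  shows "\<exists>ws'. set ws' \<subseteq> std \<and> length ws' = word_length g \<and> foldr hmul ws' hzero = g"
proof -
  have "\<exists>n. \<exists>ws. length ws = n \<and> set ws \<subseteq> std \<and> foldr hmul ws hzero = g" using assms by blast
  from LeastI_ex[OF this] show ?thesis unfolding word_length_def by blast
qed


lemma Zi_exists:
  fixes x y :: int and z :: real
  assumes "z - eps x y \<in> \<int>"
  shows "\<exists>Zi::int. real_of_int Zi = z + real_of_int \<bar>x\<bar> * real_of_int \<bar>y\<bar> / 2"
proof -
  obtain k where k: "z - eps x y = real_of_int k" using assms Ints_cases by metis
  show ?thesis
  proof (cases "odd x \<and> odd y")
    case True
    then have "odd (\<bar>x\<bar> * \<bar>y\<bar>)" by simp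
    then obtain t where t: "\<bar>x\<bar> * \<bar>y\<bar> = 2 * t + 1" using oddE by blast
    have "real_of_int (\<bar>x\<bar> * \<bar>y\<bar>) = 2 * real_of_int t + 1" unfolding t by simp
    then have "real_of_int \<bar>x\<bar> * real_of_int \<bar>y\<bar> = 2 * real_of_int t + 1" by simp
    moreover have "z = real_of_int k + 1/2" using k True by (simp add: eps_def)
    ultimately show ?thesis by (intro exI[of _ "k + t + 1"]) (simp add: field_simps)
  next
    case False
    then have "even (\<bar>x\<bar> * \<bar>y\<bar>)" by auto
    then obtain t where t: "\<bar>x\<bar> * \<bar>y\<bar> = 2 * t" by blast
    have "real_of_int (\<bar>x\<bar> * \<bar>y\<bar>) = 2 * real_of_int t" unfolding t by simp
    then have "real_of_int \<bar>x\<bar> * real_of_int \<bar>y\<bar> = 2 * real_of_int t" by simp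
    moreover have "z = real_of_int k" using k False by (simp add: eps_def)
    ultimately show ?thesis by (intro exI[of _ "k + t"]) simp
  qed
qed

lemma ab_exists:
  fixes X Y Zi :: int
  assumes "X \<ge> 0" "Y \<ge> 0" "Zi \<ge> 0"
  shows "\<exists>a b m. a \<ge> X \<and> b \<ge> Y \<and> Zi \<le> a * b \<and> m > real_of_int (a + b) - 1 \<and>
           (\<forall>P Q. P \<ge> real_of_int X \<longrightarrow> Q \<ge> real_of_int Y \<longrightarrow> P * Q \<ge> real_of_int Zi \<longrightarrow> P + Q \<ge> m)"
proof -
  consider "X^2 \<le> Zi \<and> Y^2 \<le> Zi" | "X^2 > Zi" | "Y^2 > Zi" by linarith
  then show ?thesis
  proof cases
    case 1
    then show ?thesis using caseA[OF assms(1,2)] by blast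
  next
    case 2
    then show ?thesis using caseB[OF assms 2] by blast
  next
    case 3
    obtain b m where b: "b \<ge> X" "Zi \<le> Y * b" "m > real_of_int (Y + b) - 1"
      "\<forall>P Q. P \<ge> real_of_int Y \<longrightarrow> Q \<ge> real_of_int X \<longrightarrow> P * Q \<ge> real_of_int Zi \<longrightarrow> P + Q \<ge> m"
      using caseB[OF assms(2,1,3) 3] by blast
    have "\<forall>P Q. P \<ge> real_of_int X \<longrightarrow> Q \<ge> real_of_int Y \<longrightarrow> P * Q \<ge> real_of_int Zi \<longrightarrow> P + Q \<ge> m"
    proof (intro allI impI)
      fix P Q :: real
      assume "P \<ge> real_of_int X" "Q \<ge> real_of_int Y" "P * Q \<ge> real_of_int Zi"
      then show "P + Q \<ge> m" using b(4)[rule_format, of Q P] by (simp add: mult.commute add.commute)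
    qed
    moreover have "Zi \<le> b * Y" using b(2) by (simp add: mult.commute)
    moreover have "m > real_of_int (b + Y) - 1" using b(3) by (simp add: add.commute)
    ultimately show ?thesis using b(1) by (intro exI[of _ b] exI[of _ Y] exI[of _ m]) simp
  qed
qed

theorem mainTheorem9:
  fixes x y n :: int and z :: real
  assumes "z \<ge> 0"
    and "z - eps x y \<in> \<int>"
    and "even (n - (x + y))"
    and "real_of_int n - 2 < d_CC (real_of_int x, real_of_int y, z) hzero"
    and "d_CC (real_of_int x, real_of_int y, z) hzero \<le> real_of_int n"
  shows "int (word_length (real_of_int x, real_of_int y, z)) = n"
proof -
  define g where "g = (real_of_int x, real_of_int y, z)"
  define X where "X = \<bar>x\<bar>"
  define Y where "Y = \<bar>y\<bar>"
  obtain Zi where Zi: "real_of_int Zi = z + real_of_int \<bar>x\<bar> * real_of_int \<bar>y\<bar> / 2"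
    using Zi_exists[OF assms(2)] by blast
  have X0: "X \<ge> 0" and Y0: "Y \<ge> 0" unfolding X_def Y_def by simp_all
  have Z0: "Zi \<ge> 0"
  proof -
    have "real_of_int \<bar>x\<bar> * real_of_int \<bar>y\<bar> \<ge> 0" by simp
    then have "real_of_int Zi \<ge> 0" using Zi assms(1) by linarith
    then show ?thesis by simp
  qed
  obtain a b m where ab: "a \<ge> X" "b \<ge> Y" "Zi \<le> a * b" "m > real_of_int (a + b) - 1"
    and mb: "\<forall>P Q. P \<ge> real_of_int X \<longrightarrow> Q \<ge> real_of_int Y \<longrightarrow> P * Q \<ge> real_of_int Zi \<longrightarrow> P + Q \<ge> m"
    using ab_exists[OF X0 Y0 Z0] by blast
  obtain ws where ws: "set ws \<subseteq> std" "int (length ws) \<le> 2*a + 2*b - \<bar>x\<bar> - \<bar>y\<bar>"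
    "foldr hmul ws hzero = g"
    using word_exists[of x a y b z Zi] ab assms(1) Zi unfolding X_def Y_def g_def by blast
  define S where "S = {L. admissible_length g hzero L}"
  have lb: "L \<ge> 2 * m - real_of_int X - real_of_int Y" if "L \<in> S" for L
  proof -
    have adm: "admissible_length (real_of_int x, real_of_int y, z) hzero L" using that unfolding S_def g_def by simp
    obtain l1 l2 where l: "L = l1 + l2" "\<bar>real_of_int x\<bar> \<le> l1" "\<bar>real_of_int y\<bar> \<le> l2"
      "4*z + 2*\<bar>real_of_int x * real_of_int y\<bar> \<le> (l1 + \<bar>real_of_int x\<bar>) * (l2 + \<bar>real_of_int y\<bar>)"
      using curve_bound[OF adm] by blast
    have rx: "\<bar>real_of_int x\<bar> = real_of_int X" and ry: "\<bar>real_of_int y\<bar> = real_of_int Y"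
      unfolding X_def Y_def by simp_all
    have rxy: "\<bar>real_of_int x * real_of_int y\<bar> = real_of_int X * real_of_int Y"
      unfolding X_def Y_def by (simp add: abs_mult)
    define P where "P = (l1 + real_of_int X) / 2"
    define Q where "Q = (l2 + real_of_int Y) / 2"
    have PX: "P \<ge> real_of_int X" unfolding P_def using l(2) rx by simp
    have QY: "Q \<ge> real_of_int Y" unfolding Q_def using l(3) ry by simp
    have "4 * (P * Q) = (l1 + real_of_int X) * (l2 + real_of_int Y)" unfolding P_def Q_def by (simp add: field_simps)
    also have "\<dots> \<ge> 4*z + 2*(real_of_int X * real_of_int Y)" using l(4) unfolding rx ry rxy .
    finally have "P * Q \<ge> real_of_int Zi" using Zi unfolding X_def Y_def by simp
    then have "P + Q \<ge> m" using mb PX QY by blast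
    then have "m \<le> (l1 + real_of_int X) / 2 + (l2 + real_of_int Y) / 2" unfolding P_def Q_def .
    then show ?thesis unfolding l(1) by argo
  qed
  have wsS: "real (length ws) \<in> S" unfolding S_def using adm_word[OF ws(1)] ws(3) by simp
  have bdd: "bdd_below S" using lb by (intro bdd_belowI) blast
  have dS: "d_CC g hzero = Inf S" unfolding d_CC_def S_def ..
  have dlb: "d_CC g hzero \<ge> 2 * m - real_of_int X - real_of_int Y"
    unfolding dS using wsS lb by (intro cInf_greatest) auto
  define N where "N = 2*a + 2*b - X - Y"
  have "real_of_int n > real_of_int N - 2"
    using dlb assms(5) ab(4) unfolding g_def N_def by simp
  then have nN: "n > N - 2" by linarith
  have "even (N - (x + y))" unfolding N_def X_def Y_def by (simp add: abs_if)
  then have "n \<ge> N" using nN assms(3) by presburger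
  moreover have "int (word_length g) \<le> int (length ws)" using wl_le[OF ws(1) ws(3)] by simp
  moreover have "int (length ws) \<le> N" using ws(2) unfolding N_def X_def Y_def by simp
  ultimately have up: "int (word_length g) \<le> n" by linarith
  obtain ws0 where ws0: "set ws0 \<subseteq> std" "length ws0 = word_length g" "foldr hmul ws0 hzero = g"
    using wl_ex[OF ws(1) ws(3)] by blast
  have "real (length ws0) \<in> S" unfolding S_def using adm_word[OF ws0(1)] ws0(3) by simp
  then have "d_CC g hzero \<le> real (word_length g)" unfolding dS using ws0(2) bdd by (metis cInf_lower)
  then have "real_of_int n - 2 < real_of_int (int (word_length g))" using assms(4) unfolding g_def by simp
  then have lo1: "n - 2 < int (word_length g)" by linarith
  obtain i j where ij: "fst g = of_int i" "fst (snd g) = of_int j" "even (int (length ws0) + i + j)"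
    using parity_word[OF ws0(1)] ws0(3) by blast
  have "i = x" "j = y" using ij unfolding g_def by simp_all
  then have "even (int (word_length g) + x + y)" using ij(3) ws0(2) by simp
  then have "int (word_length g) \<ge> n" using lo1 assms(3) by presburger
  with up show ?thesis unfolding g_def by simp
qed


end
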